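(* There exist domains $D_1$ and $D_2$ in $\mathbb{R}^2$ with $D_1\subset D_2$, such that $\mathbb{R}^2\setminus D_2$ contains at least two points, and a point $z\in D_1$ such that $$\lambda_{D_2}(z)=\lambda''_{D_2}(z)=\lambda'_{D_2}(z)>\lambda'_{D_1}(z)>\lambda''_{D_1}(z).$$ In particular $\lambda'_{D_2}(z)>\lambda'_{D_1}(z)$ and $\lambda''_{D_2}(z)>\lambda''_{D_1}(z)$.
   Context: Write $d(z,\partial D)=\inf\{|z-a|:a\in\partial D\}$ and $Q(z;a,b)=|z-a|\big(1+\big|\log\frac{|a-b|}{|z-a|}\big|\big)$ (equal to $+\infty$ when $a=b$). For a domain $D\subset\mathbb{R}^2$ whose complement contains at least two points and $z\in D$ define $1/\lambda_D(z)=\inf\{Q(z;a,b): a,b\in\mathbb{R}^2\setminus D\}$, $1/\lambda'_D(z)=\inf\{Q(z;a,b): a,b\in\partial D\}$, $1/\lambda''_D(z)=\inf\{Q(z;a,b): a,b\in\partial D,\ |z-a|=d(z,\partial D)\}$. *)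

theory Defs
  imports "HOL-Analysis.Analysis"
begin

definition Qf :: "complex \<Rightarrow> complex \<Rightarrow> complex \<Rightarrow> ereal" where
  "Qf z a b = (if a = b then \<infinity>
     else ereal (cmod (z - a) * (1 + \<bar>ln (cmod (a - b) / cmod (z - a))\<bar>)))"

definition dist_bd :: "complex \<Rightarrow> complex set \<Rightarrow> real" where
  "dist_bd z D = Inf {cmod (z - a) | a. a \<in> frontier D}"

definition lam :: "complex set \<Rightarrow> complex \<Rightarrow> ereal" where
  "lam D z = inverse (Inf {Qf z a b | a b. a \<notin> D \<and> b \<notin> D})"

definition lam' :: "complex set \<Rightarrow> complex \<Rightarrow> ereal" where
  "lam' D z = inverse (Inf {Qf z a b | a b. a \<in> frontier D \<and> b \<in> frontier D})"

definition lam'' :: "complex set \<Rightarrow> complex \<Rightarrow> ereal" where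
  "lam'' D z = inverse (Inf {Qf z a b | a b. a \<in> frontier D \<and> b \<in> frontier D
                                \<and> cmod (z - a) = dist_bd z D})"

definition domain :: "complex set \<Rightarrow> bool" where
  "domain D \<longleftrightarrow> open D \<and> connected D \<and> D \<noteq> {}"

end

theory Submission
  imports Defs
begin


lemma fr2: "frontier (- {1::complex, 2}) = {1, 2}"
proof -
  have "frontier {1::complex, 2} = {1, 2}"
    by (simp add: frontier_def empty_interior_finite)
  then show ?thesis by (simp only: frontier_complement)
qed

lemma fr1: "frontier (- (cball (1::complex) (1/5) \<union> {2})) = sphere 1 (1/5) \<union> {2}"
proof -
  have "interior (cball (1::complex) (1/5) \<union> {2}) = ball 1 (1/5)"
    by (subst interior_closed_Un_empty_interior) (auto simp: empty_interior_finite)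
  moreover have "closure (cball (1::complex) (1/5) \<union> {2}) = cball 1 (1/5) \<union> {2}"
    by (simp add: closed_Un)
  ultimately have "frontier (cball (1::complex) (1/5) \<union> {2}) = sphere 1 (1/5) \<union> {2}"
    unfolding frontier_def by (auto simp: dist_norm)
  then show ?thesis by (simp only: frontier_complement)
qed

lemma dom2: "domain (- {1::complex, 2})"
  unfolding domain_def
proof (intro conjI)
  show "open (- {1::complex, 2})" by (simp add: open_Compl)
  have "connected (UNIV - {1::complex,2})"
    by (rule connected_open_delete_finite) auto
  then show "connected (- {1::complex, 2})" by (simp add: Compl_eq_Diff_UNIV)
  have "0 \<in> - {1::complex, 2}" by simp
  then show "- {1::complex, 2} \<noteq> {}" by blast
qed

lemma dom1: "domain (- (cball (1::complex) (1/5) \<union> {2}))"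
  unfolding domain_def
proof (intro conjI)
  show "open (- (cball (1::complex) (1/5) \<union> {2}))" by (simp add: open_Compl closed_Un)
  have "connected (- cball (1::complex) (1/5))"
    by (rule connected_complement_bounded_convex) auto
  then have "connected (- cball (1::complex) (1/5) - {2})"
    by (intro connected_open_delete) auto
  moreover have "- cball (1::complex) (1/5) - {2} = - (cball (1::complex) (1/5) \<union> {2})" by blast
  ultimately show "connected (- (cball (1::complex) (1/5) \<union> {2}))" by simp
  have "0 \<in> - (cball (1::complex) (1/5) \<union> {2})" by (simp add: dist_norm)
  then show "- (cball (1::complex) (1/5) \<union> {2}) \<noteq> {}" by blast
qed


lemma ln_ge: "0 < x \<Longrightarrow> ln x \<ge> 1 - 1 / (x::real)"
  using ln_le_minus_one[of "1/x"] by (simp add: ln_div)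

lemma small_ratio:
  fixes r d :: real
  assumes "0 < d" "0 < r" "d \<le> r / 2"
  shows "r * (1 + \<bar>ln (d / r)\<bar>) \<ge> r * 3 / 2"
proof -
  have "ln (d / r) \<le> d / r - 1" using assms by (intro ln_le_minus_one) simp
  also have "d / r \<le> 1/2" using assms by (simp add: divide_simps)
  finally have "\<bar>ln (d / r)\<bar> \<ge> 1/2" by linarith
  then have "r * (3/2) \<le> r * (1 + \<bar>ln (d / r)\<bar>)" using assms by (intro mult_left_mono) auto
  then show ?thesis by simp
qed

lemma big_ratio:
  fixes r d :: real
  assumes "0 < r" "r \<le> d"
  shows "r * (1 + \<bar>ln (d / r)\<bar>) \<ge> r * (2 - r / d)"
proof -
  have "ln (d / r) \<ge> 1 - 1 / (d / r)" using assms by (intro ln_ge) simp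
  then have "\<bar>ln (d / r)\<bar> \<ge> 1 - r / d" by simp
  then have "r * (2 - r / d) \<le> r * (1 + \<bar>ln (d / r)\<bar>)" using assms by (intro mult_left_mono) auto
  then show ?thesis by simp
qed

lemma poly_ineq:
  fixes r :: real
  assumes "4/5 \<le> r" "r \<le> 101/100"
  shows "r * (156/25 - 4 * r^2) \<ge> (101/50) * (52/25 - r^2)"
proof -
  have eq: "r * (156/25 - 4 * r^2) - (101/50) * (52/25 - r^2)
      = (r - 4/5) * (101/100 - r) * (4 * r + 522/100) + (238/10000) * r + 1616/100000"
    by algebra
  have "(r - 4/5) * (101/100 - r) * (4 * r + 522/100) \<ge> 0"
    using assms by (intro mult_nonneg_nonneg) auto
  then show ?thesis using eq assms by linarith
qed

lemma pair_2:
  fixes r d :: real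
  assumes r: "4/5 \<le> r" and rd: "r^2 + d^2 = 52/25" and d: "0 \<le> d"
  shows "r * (1 + \<bar>ln (d / r)\<bar>) \<ge> 101/100"
proof (cases "r \<ge> 101/100")
  case True
  have "r \<le> r * (1 + \<bar>ln (d / r)\<bar>)" using r by simp
  then show ?thesis using True by linarith
next
  case False
  have "r^2 \<le> (101/100)^2" using False r by (intro power_mono) auto
  then have "r^2 \<le> 10201/10000" by (simp add: power2_eq_square)
  then have "r^2 < d^2" using rd by linarith
  then have "r < d" using d r by (simp add: power_less_imp_less_base)
  have e: "ln ((d / r)^2) = 2 * ln (d / r)" using \<open>r < d\<close> r by (simp add: ln_realpow)
  have g: "ln ((d / r)^2) \<ge> 1 - 1 / (d/r)^2" using \<open>r < d\<close> r by (intro ln_ge) simp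
  have "1 / (d/r)^2 = r^2 / d^2" by (simp add: power_divide)
  then have "1 - r^2 / d^2 \<le> 2 * ln (d / r)" using e g by simp
  then have "ln (d / r) \<ge> (1 - r^2 / d^2) / 2" by simp
  then have "\<bar>ln (d / r)\<bar> \<ge> (1 - r^2 / d^2) / 2" by linarith
  then have "r * (1 + \<bar>ln (d / r)\<bar>) \<ge> r * (1 + (1 - r^2 / d^2) / 2)" using r by (intro mult_left_mono) auto
  moreover have d2: "d^2 > 0" using \<open>r < d\<close> r by simp
  have eq1: "r * (1 + (1 - r^2 / d^2) / 2) = r * (3 * d^2 - r^2) / (2 * d^2)"
    using d2 by (simp add: field_simps)
  have eq2: "3 * d^2 - r^2 = 156/25 - 4 * r^2" using rd by simp
  have pi: "r * (156/25 - 4 * r^2) \<ge> (101/50) * d^2"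
    using poly_ineq[of r] r False rd by simp
  have "r * (156/25 - 4 * r^2) / (2 * d^2) \<ge> ((101/50) * d^2) / (2 * d^2)"
    using pi d2 by (intro divide_right_mono) auto
  moreover have "((101/50) * d^2) / (2 * d^2) = 101/100" using d2 by simp
  ultimately show ?thesis using eq1 eq2 by (metis order_trans)
qed

lemma Qf_ge_cmod: "Qf 0 a b \<ge> ereal (cmod a)"
  unfolding Qf_def by (simp add: mult_le_cancel_left1)

lemma Qf_eq: "a \<noteq> b \<Longrightarrow> Qf 0 a b = ereal (cmod a * (1 + \<bar>ln (cmod (a - b) / cmod a)\<bar>))"
  unfolding Qf_def by simp

lemma parallelogram: "cmod a ^ 2 + cmod (a - 2) ^ 2 = 2 * cmod (a - 1) ^ 2 + 2"
  unfolding cmod_power2 by (simp add: power2_eq_square algebra_simps)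

lemma sph_norm: "a \<in> sphere (1::complex) (1/5) \<Longrightarrow> cmod a \<ge> 4/5 \<and> cmod (a - 1) = 1/5"
proof -
  assume "a \<in> sphere (1::complex) (1/5)"
  then have h: "cmod (a - 1) = 1/5" by (simp add: dist_norm norm_minus_commute)
  have "cmod (1::complex) \<le> cmod a + cmod (a - 1)" by (metis norm_triangle_sub add.commute norm_minus_commute)
  then show ?thesis using h by simp
qed

lemma sph_diam: "a \<in> sphere (1::complex) (1/5) \<Longrightarrow> b \<in> sphere 1 (1/5) \<Longrightarrow> cmod (a - b) \<le> 2/5"
proof -
  assume "a \<in> sphere (1::complex) (1/5)" "b \<in> sphere (1::complex) (1/5)"
  then have "cmod (a - 1) = 1/5" "cmod (b - 1) = 1/5" by (simp_all add: dist_norm norm_minus_commute)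
  moreover have "cmod (a - b) \<le> cmod (a - 1) + cmod (b - 1)"
    by (metis norm_triangle_ineq4 diff_diff_eq2 diff_add_cancel add_diff_cancel_left' diff_diff_eq)
  ultimately show ?thesis by simp
qed

lemma sph_sph:
  assumes "a \<in> sphere (1::complex) (1/5)" "b \<in> sphere 1 (1/5)" "a \<noteq> b"
  shows "Qf 0 a b \<ge> ereal (6/5)"
proof -
  have ra: "cmod a \<ge> 4/5" using sph_norm[OF assms(1)] by simp
  have "cmod (a - b) > 0" using assms by simp
  moreover have "cmod (a - b) \<le> cmod a / 2" using sph_diam[OF assms(1,2)] ra by simp
  ultimately have "cmod a * (1 + \<bar>ln (cmod (a - b) / cmod a)\<bar>) \<ge> cmod a * 3 / 2"
    using ra by (intro small_ratio) auto
  then have "cmod a * (1 + \<bar>ln (cmod (a - b) / cmod a)\<bar>) \<ge> 6/5" using ra by linarith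
  then show ?thesis using Qf_eq[OF assms(3)] by simp
qed

lemma lowD1:
  assumes "a \<in> sphere (1::complex) (1/5) \<union> {2}" "b \<in> sphere (1::complex) (1/5) \<union> {2}"
  shows "Qf 0 a b \<ge> ereal (101/100)"
proof (cases "a = b")
  case True then show ?thesis by (simp add: Qf_def)
next
  case ne: False
  show ?thesis
  proof (cases "a = 2")
    case True
    moreover have "ereal (101/100) \<le> ereal 2" by simp
    ultimately show ?thesis using Qf_ge_cmod[of a b] by (metis order_trans norm_numeral)
  next
    case False
    then have a: "a \<in> sphere 1 (1/5)" using assms by auto
    show ?thesis
    proof (cases "b = 2")
      case False
      then have "b \<in> sphere 1 (1/5)" using assms by auto
      then have "Qf 0 a b \<ge> ereal (6/5)" using sph_sph a ne by blast
      moreover have "ereal (101/100) \<le> ereal (6/5)" by simp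
      ultimately show ?thesis by (metis order_trans)
    next
      case True
      have "cmod a ^ 2 + cmod (a - 2) ^ 2 = 52/25" using parallelogram[of a] sph_norm[OF a] by (simp add: power2_eq_square)
      then have "cmod a * (1 + \<bar>ln (cmod (a - 2) / cmod a)\<bar>) \<ge> 101/100"
        using sph_norm[OF a] by (intro pair_2) auto
      then show ?thesis using Qf_eq[OF ne] True by simp
    qed
  qed
qed

lemma nearD1:
  assumes "a \<in> sphere (1::complex) (1/5) \<union> {2}" "b \<in> sphere (1::complex) (1/5) \<union> {2}"
    and "cmod a = 4/5"
  shows "Qf 0 a b \<ge> ereal (16/15)"
proof (cases "a = b")
  case True then show ?thesis by (simp add: Qf_def)
next
  case ne: False
  have a: "a \<in> sphere 1 (1/5)" using assms by auto
  show ?thesis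
  proof (cases "b = 2")
    case False
    then have "b \<in> sphere 1 (1/5)" using assms by auto
    then have "Qf 0 a b \<ge> ereal (6/5)" using sph_sph a ne by blast
    moreover have "ereal (16/15) \<le> ereal (6/5)" by simp
    ultimately show ?thesis by (metis order_trans)
  next
    case True
    have "cmod (2::complex) \<le> cmod a + cmod (a - 2)"
      by (metis norm_triangle_sub add.commute norm_minus_commute)
    then have d: "cmod (a - 2) \<ge> 6/5" using assms(3) by simp
    have "cmod a * (1 + \<bar>ln (cmod (a - 2) / cmod a)\<bar>) \<ge> cmod a * (2 - cmod a / cmod (a - 2))"
      using d assms(3) by (intro big_ratio) auto
    moreover have "cmod a / cmod (a - 2) \<le> 2/3" using d assms(3) by (simp add: divide_simps)
    then have "cmod a * (2 - cmod a / cmod (a - 2)) \<ge> cmod a * (4/3)"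
      by (intro mult_left_mono) auto
    ultimately have "cmod a * (1 + \<bar>ln (cmod (a - 2) / cmod a)\<bar>) \<ge> 16/15" using assms(3) by linarith
    then show ?thesis using Qf_eq[OF ne] True by simp
  qed
qed


lemma Qf_12: "Qf 0 1 2 = 1"
  unfolding Qf_def by (simp add: one_ereal_def)

lemma low12:
  assumes "a \<in> {1::complex, 2}" "b \<in> {1, 2}"
  shows "Qf 0 a b \<ge> 1"
proof (cases "a = b")
  case True then show ?thesis by (simp add: Qf_def)
next
  case False
  show ?thesis
  proof (cases "a = 1")
    case True
    then have "b = 2" using False assms by auto
    then show ?thesis using True Qf_12 by simp
  next
    case a2: False
    then have "a = 2" using assms by auto
    then have "ereal 2 \<le> Qf 0 a b" using Qf_ge_cmod[of a b] by simp
    moreover have "(1::ereal) \<le> ereal 2" by (simp add: one_ereal_def)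
    ultimately show ?thesis by (metis order_trans)
  qed
qed

lemma Inf_one:
  assumes "\<And>a b. P a b \<Longrightarrow> a \<in> {1::complex, 2} \<and> b \<in> {1, 2}" "P 1 2"
  shows "Inf {Qf 0 a b | a b. P a b} = 1"
proof (rule antisym)
  show "Inf {Qf 0 a b | a b. P a b} \<le> 1"
    using assms(2) Qf_12 by (metis (mono_tags, lifting) Inf_lower mem_Collect_eq)
  show "1 \<le> Inf {Qf 0 a b | a b. P a b}"
    using assms(1) low12 by (intro Inf_greatest) blast
qed

lemma dist2: "dist_bd 0 (- {1::complex, 2}) = 1"
proof -
  have "{cmod (0 - a) | a. a \<in> frontier (- {1::complex, 2})} = {1, 2}"
    unfolding fr2 by (auto intro: exI[of _ "1::complex"] exI[of _ "2::complex"])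
  moreover have "Inf {1, 2::real} = 1" by (rule cInf_eq_minimum) auto
  ultimately show ?thesis unfolding dist_bd_def by simp
qed

lemma dist1: "dist_bd 0 (- (cball (1::complex) (1/5) \<union> {2})) = 4/5"
  unfolding dist_bd_def fr1
proof (rule cInf_eq_minimum)
  have "(4/5::complex) \<in> sphere 1 (1/5)"
    by (simp add: dist_norm)
  then show "4/5 \<in> {cmod (0 - a) |a. a \<in> sphere 1 (1 / 5) \<union> {2}}"
    by (intro CollectI exI[of _ "4/5"]) auto
  fix x assume "x \<in> {cmod (0 - a) |a. a \<in> sphere (1::complex) (1 / 5) \<union> {2}}"
  then obtain a where "x = cmod a" "a \<in> sphere (1::complex) (1 / 5) \<union> {2}" by auto
  then show "4/5 \<le> x" using sph_norm[of a] by auto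
qed

lemma wit: "Qf 0 (1 + \<i>/5) 2 \<le> ereal (21/20)"
proof -
  define w :: complex where "w = 1 + \<i>/5"
  have n: "cmod (w - 2) = cmod w"
    unfolding w_def by (simp add: cmod_def)
  have "cmod w ^ 2 \<le> (21/20)^2"
    unfolding cmod_power2 w_def by (simp add: power2_eq_square)
  then have c: "cmod w \<le> 21/20" by (rule power2_le_imp_le) simp
  have "w \<noteq> 2" unfolding w_def by (simp add: complex_eq_iff)
  then have "Qf 0 w 2 = ereal (cmod w * (1 + \<bar>ln (cmod (w - 2) / cmod w)\<bar>))" by (rule Qf_eq)
  also have "\<dots> = ereal (cmod w)" unfolding n using \<open>w \<noteq> 2\<close> by (simp add: w_def complex_eq_iff)
  finally show ?thesis using c unfolding w_def by simp
qed

theorem lemma5: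
  shows "\<exists>D1 D2 z. domain D1 \<and> domain D2 \<and> D1 \<subseteq> D2 \<and>
     (\<exists>p q. p \<noteq> q \<and> p \<notin> D2 \<and> q \<notin> D2) \<and> z \<in> D1 \<and>
     lam D2 z = lam'' D2 z \<and> lam'' D2 z = lam' D2 z \<and>
     lam' D2 z > lam' D1 z \<and> lam' D1 z > lam'' D1 z \<and>
     lam' D2 z > lam' D1 z \<and> lam'' D2 z > lam'' D1 z"
proof -
  define D1 where "D1 = - (cball (1::complex) (1/5) \<union> {2})"
  define D2 where "D2 = - {1::complex, 2}"
  have L2: "lam D2 0 = 1"
    unfolding lam_def D2_def by (subst Inf_one) auto
  have L2': "lam' D2 0 = 1"
    unfolding lam'_def D2_def fr2 by (subst Inf_one) auto
  have L2'': "lam'' D2 0 = 1"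
    unfolding lam''_def D2_def fr2 dist2 by (subst Inf_one) auto
  define X where "X = Inf {Qf 0 a b | a b. a \<in> frontier D1 \<and> b \<in> frontier D1}"
  define Y where "Y = Inf {Qf 0 a b | a b. a \<in> frontier D1 \<and> b \<in> frontier D1
                                \<and> cmod (0 - a) = dist_bd 0 D1}"
  have X1: "X \<ge> ereal (101/100)"
    unfolding X_def D1_def fr1 using lowD1 by (intro Inf_greatest) blast
  have w: "1 + \<i>/5 \<in> sphere (1::complex) (1/5)"
    by (simp add: dist_norm)
  have X2: "X \<le> ereal (21/20)"
  proof -
    have "X \<le> Qf 0 (1 + \<i>/5) 2"
      unfolding X_def D1_def fr1 using w by (intro Inf_lower) blast
    then show ?thesis using wit by (metis order_trans)
  qed
  have Y1: "Y \<ge> ereal (16/15)"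
    unfolding Y_def D1_def fr1 dist1 using nearD1 by (intro Inf_greatest) auto
  have "1 < X"
  proof -
    have "(1::ereal) < ereal (101/100)" by (simp add: one_ereal_def)
    then show ?thesis using X1 by (metis order_less_le_trans)
  qed
  have "X < Y"
  proof -
    have "ereal (21/20) < ereal (16/15)" by simp
    then show ?thesis using X2 Y1 by (metis order_le_less_trans order_less_le_trans)
  qed
  have lX: "lam' D1 0 = inverse X" unfolding lam'_def X_def by simp
  have lY: "lam'' D1 0 = inverse Y" unfolding lam''_def Y_def by simp
  have "inverse X < inverse (1::ereal)"
    by (rule ereal_inverse_antimono_strict[OF _ \<open>1 < X\<close>]) simp
  then have i1: "inverse X < 1" by simp
  have "(0::ereal) \<le> 1" by simp
  then have "0 \<le> X" using less_imp_le[OF \<open>1 < X\<close>] by (rule order_trans)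
  have i2: "inverse Y < inverse X"
    by (rule ereal_inverse_antimono_strict[OF \<open>0 \<le> X\<close> \<open>X < Y\<close>])
  have i3: "inverse Y < 1" by (rule order_less_trans[OF i2 i1])
  have main: "lam D2 0 = lam'' D2 0 \<and> lam'' D2 0 = lam' D2 0 \<and>
     lam' D2 0 > lam' D1 0 \<and> lam' D1 0 > lam'' D1 0 \<and>
     lam' D2 0 > lam' D1 0 \<and> lam'' D2 0 > lam'' D1 0"
    by (simp only: L2 L2' L2'' lX lY) (simp add: i1 i2 i3)
  have "domain D1" unfolding D1_def by (rule dom1)
  moreover have "domain D2" unfolding D2_def by (rule dom2)
  moreover have "D1 \<subseteq> D2" unfolding D1_def D2_def by (auto simp: dist_norm)
  moreover have "(1::complex) \<noteq> 2 \<and> 1 \<notin> D2 \<and> 2 \<notin> D2" unfolding D2_def by simp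
  moreover have "0 \<in> D1" unfolding D1_def by (simp add: dist_norm)
  ultimately show ?thesis using main by blast
qed

end
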